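(* Let $T$ be a block: tetrahedra $\Delta_1,\dots,\Delta_n$ all sharing a common edge $e$ with endpoints $x_1,x_2$, arranged cyclically around $e$, where for $i=1,\dots,n$ the tetrahedra $\Delta_i$ and $\Delta_{i+1}$ (indices mod $n$) are glued along a face $F_i$ containing $e$, and $e$ is not on the boundary. Let $N$ be normal coordinates on $T$ satisfying the matching equations. Build a directed graph $G$ with vertices $u_0,\dots,u_n,w_0,\dots,w_n$, where $u_i$ (resp. $w_i$) represents the normal arcs in $F_i$ crossing $e$ and separating $x_1$ (resp. $x_2$) from the other two vertices of $F_i$ (with $F_0=F_n$, but $u_0\neq u_n$ and $w_0\neq w_n$ as vertices of $G$). For each $i=1,\dots,n$, and each normal disk type in $\Delta_i$ meeting $e$, add one directed edge from the vertex of index $i-1$ corresponding to its arc in $F_{i-1}$ to the vertex of index $i$ corresponding to its arc in $F_i$ (so: triangle at $x_1$ gives $u_{i-1}\to u_i$, triangle at $x_2$ gives $w_{i-1}\to w_i$, and the two quadrilaterals meeting $e$ give $u_{i-1}\to w_i$ and $w_{i-1}\to u_i$), with capacity equal to the corresponding normal coordinate. Let $s_1=u_0$ and $t_1=u_n$. Then $N$ is immersible if and only if the maximum flow in $G$ from $s_1$ to $t_1$ equals the sum of the capacities of the edges leaving $s_1$.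
   Context: In a tetrahedron there are 7 normal disk types: 4 triangles (separating one vertex from the other three) and 3 quadrilaterals (separating two vertices from the other two); normal coordinates give the number of disks of each type in each tetrahedron. For a glued face and a normal arc type in it, the matching equation says the total number of disks (triangle plus quadrilateral) producing that arc on one side equals that on the other side. Placing the prescribed disks in general position (they may intersect), a global gluing is a choice, for each arc type in each glued face, of a bijection between disks on the two sides with that arc type; the glued result is a singular normal surface. $N$ is immersible if some global gluing yields an immersed surface, i.e., one with no branch point; in a block, a branch point occurs exactly when some closed curve formed by the glued normal disks meeting $e$ winds more than once around $e$. A flow from $s$ to $t$ in a directed graph with nonnegative integer capacities is a collection of directed $s$–$t$ paths using each edge $a$ at most $c(a)$ times; a maximum flow maximizes the number of paths. *)

theory Defs
  imports Main "HOL-Library.Multiset"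
begin

text \<open>Each tetrahedron of the block has vertices labelled 0 = x1, 1 = x2,
 2 = p (the third vertex of its "previous" glued face) and 3 = q (the third vertex
 of its "next" glued face).  So the previous face is {0,1,2}, the next face is {0,1,3},
 and the common edge e is {0,1}.
 Disk types: triangles T k (separating vertex k) and quadrilaterals
 Q01 = {0,1}|{2,3}, Q02 = {0,2}|{1,3}, Q03 = {0,3}|{1,2}.\<close>

datatype disk = T0 | T1 | T2 | T3 | Q01 | Q02 | Q03

text \<open>Normal arc types in a glued face (containing e) are labelled by the vertex
 of the face they separate: 0 = x1, 1 = x2, 2 = the third vertex of the face.
 arc_prev d / arc_next d: the arc type that disk type d produces in the previous /
 next face (None if d does not meet that face).\<close>

fun arc_prev :: "disk \<Rightarrow> nat option" where
  "arc_prev T0 = Some 0" | "arc_prev T1 = Some 1" | "arc_prev T2 = Some 2"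
| "arc_prev T3 = None" | "arc_prev Q01 = Some 2" | "arc_prev Q02 = Some 1"
| "arc_prev Q03 = Some 0"

fun arc_next :: "disk \<Rightarrow> nat option" where
  "arc_next T0 = Some 0" | "arc_next T1 = Some 1" | "arc_next T2 = None"
| "arc_next T3 = Some 2" | "arc_next Q01 = Some 2" | "arc_next Q02 = Some 0"
| "arc_next Q03 = Some 1"

definition meets_e :: "disk \<Rightarrow> bool" where
  "meets_e d \<longleftrightarrow> d \<in> {T0, T1, Q02, Q03}"

text \<open>A block with n tetrahedra is indexed by 0..n-1 (tetrahedron i is the paper's
 Delta_(i+1)); the next face of tetrahedron i is glued to the previous face of tetrahedron
 (i+1) mod n, identifying x1 with x1, x2 with x2 and q with p.
 Normal coordinates: N i d = number of disks of type d in tetrahedron i.\<close>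

definition matching :: "nat \<Rightarrow> (nat \<Rightarrow> disk \<Rightarrow> nat) \<Rightarrow> bool" where
  "matching n N \<longleftrightarrow> (\<forall>i<n. \<forall>a<3.
     (\<Sum>d\<in>{d. arc_next d = Some a}. N i d) = (\<Sum>d\<in>{d. arc_prev d = Some a}. N ((i+1) mod n) d))"

definition disks_next :: "(nat \<Rightarrow> disk \<Rightarrow> nat) \<Rightarrow> nat \<Rightarrow> (disk \<times> nat) set" where
  "disks_next N i = {(d,k). k < N i d \<and> arc_next d \<noteq> None}"

definition disks_prev :: "(nat \<Rightarrow> disk \<Rightarrow> nat) \<Rightarrow> nat \<Rightarrow> (disk \<times> nat) set" where
  "disks_prev N i = {(d,k). k < N i d \<and> arc_prev d \<noteq> None}"

definition global_gluing :: "nat \<Rightarrow> (nat \<Rightarrow> disk \<Rightarrow> nat) \<Rightarrow> (nat \<Rightarrow> disk \<times> nat \<Rightarrow> disk \<times> nat) \<Rightarrow> bool" where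
  "global_gluing n N \<sigma> \<longleftrightarrow> (\<forall>i<n.
     bij_betw (\<sigma> i) (disks_next N i) (disks_prev N ((i+1) mod n)) \<and>
     (\<forall>x\<in>disks_next N i. arc_prev (fst (\<sigma> i x)) = arc_next (fst x)))"

text \<open>Following a disk around e: glue across faces F_1, F_2, ..., F_m.\<close>
fun walk :: "(nat \<Rightarrow> disk \<times> nat \<Rightarrow> disk \<times> nat) \<Rightarrow> nat \<Rightarrow> disk \<times> nat \<Rightarrow> disk \<times> nat" where
  "walk \<sigma> 0 x = x"
| "walk \<sigma> (Suc m) x = \<sigma> m (walk \<sigma> m x)"

text \<open>No branch point: the closed curve through every disk meeting e closes up after one
 turn around e, i.e. it winds exactly once around e.\<close>
definition immersed_gluing :: "nat \<Rightarrow> (nat \<Rightarrow> disk \<Rightarrow> nat) \<Rightarrow> (nat \<Rightarrow> disk \<times> nat \<Rightarrow> disk \<times> nat) \<Rightarrow> bool" where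
  "immersed_gluing n N \<sigma> \<longleftrightarrow>
     (\<forall>d k. meets_e d \<and> k < N 0 d \<longrightarrow> walk \<sigma> n (d,k) = (d,k))"

definition immersible :: "nat \<Rightarrow> (nat \<Rightarrow> disk \<Rightarrow> nat) \<Rightarrow> bool" where
  "immersible n N \<longleftrightarrow> (\<exists>\<sigma>. global_gluing n N \<sigma> \<and> immersed_gluing n N \<sigma>)"

text \<open>Directed graph without parallel edges: edge set E, capacity c. A directed s-t path
 is a vertex list starting at s, ending at t, with consecutive pairs in E.\<close>

definition path_edges :: "'v list \<Rightarrow> ('v \<times> 'v) list" where
  "path_edges vs = zip vs (tl vs)"

definition st_path :: "('v \<times> 'v) set \<Rightarrow> 'v \<Rightarrow> 'v \<Rightarrow> 'v list \<Rightarrow> bool" where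
  "st_path E s t vs \<longleftrightarrow> vs \<noteq> [] \<and> hd vs = s \<and> last vs = t \<and> set (path_edges vs) \<subseteq> E"

text \<open>A flow: a multiset of s-t paths using each edge a at most c a times in total.\<close>
definition is_flow :: "('v \<times> 'v) set \<Rightarrow> ('v \<times> 'v \<Rightarrow> nat) \<Rightarrow> 'v \<Rightarrow> 'v \<Rightarrow> 'v list multiset \<Rightarrow> bool" where
  "is_flow E c s t P \<longleftrightarrow> (\<forall>p\<in>#P. st_path E s t p) \<and>
     (\<forall>a\<in>E. (\<Sum>p\<in>#P. count_list (path_edges p) a) \<le> c a)"

definition max_flow :: "('v \<times> 'v) set \<Rightarrow> ('v \<times> 'v \<Rightarrow> nat) \<Rightarrow> 'v \<Rightarrow> 'v \<Rightarrow> nat" where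
  "max_flow E c s t = Max {size P | P. is_flow E c s t P}"

datatype vert = U nat | W nat

text \<open>For the paper's Delta_i (= tetrahedron i-1 here), i = 1..n: T x1 gives u_(i-1) -> u_i,
 T x2 gives w_(i-1) -> w_i, the quad Q03 (arc at x1 in F_(i-1), at x2 in F_i) gives
 u_(i-1) -> w_i, the quad Q02 gives w_(i-1) -> u_i.\<close>

definition G_edges :: "nat \<Rightarrow> (vert \<times> vert) set" where
  "G_edges n = (\<Union>i\<in>{1..n}. {(U (i-1), U i), (W (i-1), W i), (U (i-1), W i), (W (i-1), U i)})"

fun G_cap :: "(nat \<Rightarrow> disk \<Rightarrow> nat) \<Rightarrow> vert \<times> vert \<Rightarrow> nat" where
  "G_cap N (U j, U i) = (if i = Suc j then N j T0 else 0)"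
| "G_cap N (W j, W i) = (if i = Suc j then N j T1 else 0)"
| "G_cap N (U j, W i) = (if i = Suc j then N j Q03 else 0)"
| "G_cap N (W j, U i) = (if i = Suc j then N j Q02 else 0)"

end

theory Submission
  imports Defs
begin

fun idx :: "vert \<Rightarrow> nat" where "idx (U i) = i" | "idx (W i) = i"
fun lt :: "vert \<Rightarrow> bool" where "lt (U i) = False" | "lt (W i) = True"
definition mkv :: "bool \<Rightarrow> nat \<Rightarrow> vert" where "mkv b j = (if b then W j else U j)"

lemma vert_eq: "x = mkv (lt x) (idx x)"
  by (cases x) (auto simp: mkv_def)

lemma mkv_simps[simp]: "idx (mkv b j) = j" "lt (mkv b j) = b"
  by (auto simp: mkv_def)

lemma mkv_eq_iff: "mkv b j = x \<longleftrightarrow> lt x = b \<and> idx x = j"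
  by (cases x) (auto simp: mkv_def)
lemma mkv_eq_iff2: "x = mkv b j \<longleftrightarrow> lt x = b \<and> idx x = j"
  by (cases x) (auto simp: mkv_def)

lemma G_edges_iff: "(x,y) \<in> G_edges n \<longleftrightarrow> idx y = Suc (idx x) \<and> idx x < n"
  unfolding G_edges_def
  apply (cases x; cases y)
  apply (auto)
  done

fun dk :: "bool \<Rightarrow> bool \<Rightarrow> disk" where
  "dk False False = T0" | "dk True True = T1" | "dk False True = Q03" | "dk True False = Q02"

lemma G_cap_eq: "idx y = Suc (idx x) \<Longrightarrow> G_cap N (x,y) = N (idx x) (dk (lt x) (lt y))"
  by (cases x; cases y; auto)

lemma dk_inj[simp]: "dk X Y = dk X' Y' \<longleftrightarrow> X = X' \<and> Y = Y'"
  by (cases X; cases Y; cases X'; cases Y'; auto)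

lemma meets_e_dk: "meets_e d \<longleftrightarrow> (\<exists>X Y. d = dk X Y)"
proof
  assume "meets_e d" then show "\<exists>X Y. d = dk X Y"
    unfolding meets_e_def by (metis dk.simps empty_iff insert_iff)
next
  assume "\<exists>X Y. d = dk X Y" then show "meets_e d"
    unfolding meets_e_def by (metis dk.elims insert_iff)
qed

lemma meets_dk[simp]: "meets_e (dk X Y)"
  using meets_e_dk by blast

lemma arc_dk[simp]: "arc_prev (dk X Y) = Some (if X then 1 else 0)"
   "arc_next (dk X Y) = Some (if Y then 1 else 0)"
  by (cases X; cases Y; auto)+

lemma meets_prev: "meets_e d \<longleftrightarrow> arc_prev d = Some 0 \<or> arc_prev d = Some 1"
  by (cases d) (auto simp: meets_e_def)
lemma meets_next: "meets_e d \<longleftrightarrow> arc_next d = Some 0 \<or> arc_next d = Some 1"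
  by (cases d) (auto simp: meets_e_def)

lemma path_edges_nth: "path_edges p = map (\<lambda>i. (p!i, p!Suc i)) [0..<length p - 1]"
  unfolding path_edges_def
  by (rule nth_equalityI) (auto simp: nth_tl)

lemma count_map_upt: "count_list (map g [0..<n]) e = card {i. i < n \<and> g i = e}"
  unfolding count_list_eq_length_filter length_filter_conv_card by (rule arg_cong[where f=card]) auto

lemma cnt_layered:
  assumes "length p = Suc n" "\<forall>i<Suc n. idx (p!i) = i" "j < n"
  shows "count_list (path_edges p) (mkv X j, mkv Y (Suc j)) =
     (if lt (p!j) = X \<and> lt (p!Suc j) = Y then 1 else 0)"
proof -
  have "{i. i < n \<and> (p!i, p!Suc i) = (mkv X j, mkv Y (Suc j))} =
        (if lt (p!j) = X \<and> lt (p!Suc j) = Y then {j} else {})"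
    using assms by (auto simp: mkv_eq_iff2)
  then show ?thesis using assms by (simp add: path_edges_nth count_map_upt)
qed

lemma layered_path:
  assumes "st_path (G_edges n) (U 0) t p"
  shows "\<forall>i<length p. idx (p!i) = i"
proof -
  have hd: "p!0 = U 0" "p \<noteq> []" using assms by (auto simp: st_path_def hd_conv_nth)
  have e: "\<And>i. Suc i < length p \<Longrightarrow> (p!i, p!Suc i) \<in> G_edges n"
    using assms unfolding st_path_def path_edges_nth
    by (auto simp: subset_iff)
  show ?thesis
  proof (intro allI impI)
    fix i assume "i < length p" then show "idx (p!i) = i"
    proof (induction i)
      case 0 then show ?case using hd by simp
    next
      case (Suc i) then show ?case using e[of i] by (simp add: G_edges_iff)
    qed
  qed
qed

lemma layered_path_len:
  assumes "st_path (G_edges n) (U 0) (U n) p"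
  shows "length p = Suc n"
proof -
  have l: "\<forall>i<length p. idx (p!i) = i" using layered_path[OF assms] .
  have "p \<noteq> []" "last p = U n" using assms by (auto simp: st_path_def)
  then have "p ! (length p - 1) = U n" by (simp add: last_conv_nth)
  with l `p \<noteq> []` have "length p - 1 = n"
    by (metis diff_less idx.simps(1) length_greater_0_conv less_one)
  then show ?thesis using `p \<noteq> []` by (cases p) auto
qed


lemma typed_bij:
  assumes "finite A" "finite B" "\<And>d. card {a\<in>A. f a = d} = card {b\<in>B. g b = d}"
  shows "\<exists>h. bij_betw h A B \<and> (\<forall>a\<in>A. g (h a) = f a)"
proof -
  define hd where "hd d = (SOME h. bij_betw h {a\<in>A. f a = d} {b\<in>B. g b = d})" for d
  have hb: "bij_betw (hd d) {a\<in>A. f a = d} {b\<in>B. g b = d}" for d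
  proof -
    have "\<exists>h. bij_betw h {a\<in>A. f a = d} {b\<in>B. g b = d}"
      by (rule finite_same_card_bij) (use assms in auto)
    then show ?thesis unfolding hd_def by (rule someI_ex)
  qed
  define h where "h a = hd (f a) a" for a
  have g: "\<forall>a\<in>A. g (h a) = f a \<and> h a \<in> B"
    using hb unfolding h_def bij_betw_def by blast
  have "inj_on h A"
  proof (rule inj_onI)
    fix a a' assume a: "a \<in> A" "a' \<in> A" "h a = h a'"
    then have "f a = f a'" using g by metis
    then show "a = a'" using a hb[of "f a"] unfolding h_def bij_betw_def inj_on_def by auto
  qed
  moreover have "h ` A = B"
  proof
    show "h ` A \<subseteq> B" using g by auto
    show "B \<subseteq> h ` A"
    proof
      fix b assume "b \<in> B"
      then have "b \<in> hd (g b) ` {a\<in>A. f a = g b}" using hb[of "g b"] unfolding bij_betw_def by auto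
      then obtain a where "a \<in> A" "f a = g b" "b = hd (g b) a" by auto
      then have "b = h a" unfolding h_def by simp
      then show "b \<in> h ` A" using \<open>a \<in> A\<close> by blast
    qed
  qed
  ultimately show ?thesis using g unfolding bij_betw_def by blast
qed

lemma card_split:
  fixes K :: nat
  shows "card {l. l < K \<and> P l} = card {l. l < K \<and> P l \<and> b l = False} + card {l. l < K \<and> P l \<and> b l = True}"
proof -
  have "{l. l < K \<and> P l} = {l. l < K \<and> P l \<and> b l = False} \<union> {l. l < K \<and> P l \<and> b l = True}" by auto
  moreover have "card ({l. l < K \<and> P l \<and> b l = False} \<union> {l. l < K \<and> P l \<and> b l = True}) = card {l. l < K \<and> P l \<and> b l = False} + card {l. l < K \<and> P l \<and> b l = True}"
    by (rule card_Un_disjoint) auto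
  ultimately show ?thesis by simp
qed

lemma card_combine:
  fixes a b :: nat
  shows "card {l. l < a + b \<and> (if l < a then P l else Q (l - a))} = card {l. l < a \<and> P l} + card {l. l < b \<and> Q l}"
proof -
  have "{l. l < a + b \<and> (if l < a then P l else Q (l - a))} = {l. l < a \<and> P l} \<union> (\<lambda>l. l + a) ` {l. l < b \<and> Q l}"
  proof (rule set_eqI)
    fix l
    show "l \<in> {l. l < a + b \<and> (if l < a then P l else Q (l - a))} \<longleftrightarrow> l \<in> {l. l < a \<and> P l} \<union> (\<lambda>l. l + a) ` {l. l < b \<and> Q l}"
    proof (cases "l < a")
      case True then show ?thesis by auto
    next
      case False
      then have l: "l = (l - a) + a" by simp
      show ?thesis
      proof
        assume "l \<in> {l. l < a + b \<and> (if l < a then P l else Q (l - a))}"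
        then have "l - a \<in> {l. l < b \<and> Q l}" using False by auto
        then show "l \<in> {l. l < a \<and> P l} \<union> (\<lambda>l. l + a) ` {l. l < b \<and> Q l}" using l by blast
      next
        assume "l \<in> {l. l < a \<and> P l} \<union> (\<lambda>l. l + a) ` {l. l < b \<and> Q l}"
        then obtain m where "m < b" "Q m" "l = m + a" using False by auto
        then show "l \<in> {l. l < a + b \<and> (if l < a then P l else Q (l - a))}" by auto
      qed
    qed
  qed
  moreover have "card ((\<lambda>l. l + a) ` {l. l < b \<and> Q l}) = card {l. l < b \<and> Q l}"
    by (rule card_image) (auto simp: inj_on_def)
  moreover have "card ({l. l < a \<and> P l} \<union> (\<lambda>l. l + a) ` {l. l < b \<and> Q l}) = card {l. l < a \<and> P l} + card ((\<lambda>l. l + a) ` {l. l < b \<and> Q l})"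
    by (rule card_Un_disjoint) auto
  ultimately show ?thesis by simp
qed

lemma card_bij_pre:
  assumes "bij_betw g A B"
  shows "card {a\<in>A. P (g a)} = card {b\<in>B. P b}"
proof -
  have "g ` {a\<in>A. P (g a)} = {b\<in>B. P b}" using assms unfolding bij_betw_def by auto
  moreover have "inj_on g {a\<in>A. P (g a)}" using assms unfolding bij_betw_def by (auto intro: inj_on_subset)
  ultimately show ?thesis by (metis card_image)
qed

lemma ext_step:
  fixes K :: nat and c :: "nat \<Rightarrow> nat \<Rightarrow> bool" and f :: "nat \<Rightarrow> bool \<Rightarrow> bool \<Rightarrow> nat"
  assumes "\<And>X. card {l. l < K \<and> c l m = X} = f m X False + f m X True"
  shows "\<exists>c'. (\<forall>l j. j \<le> m \<longrightarrow> c' l j = c l j) \<and>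
     (\<forall>X Y. card {l. l < K \<and> c' l m = X \<and> c' l (Suc m) = Y} = f m X Y)"
proof -
  define B where "B = {(X,Y,k). k < f m X Y}"
  have B: "B = (\<Union>X Y. {(X,Y,k)| k. k < f m X Y})" unfolding B_def by auto
  have fB: "finite B" unfolding B by auto
  have cB: "card {b\<in>B. fst b = X \<and> fst (snd b) = Y} = f m X Y" for X Y
  proof -
    have "{b\<in>B. fst b = X \<and> fst (snd b) = Y} = (\<lambda>k. (X,Y,k)) ` {..<f m X Y}"
      unfolding B_def by auto
    then show ?thesis by (simp add: card_image inj_on_def)
  qed
  have cB2: "card {b\<in>B. fst b = X} = f m X False + f m X True" for X
  proof -
    have "{b\<in>B. fst b = X} = {b\<in>B. fst b = X \<and> fst (snd b) = False} \<union> {b\<in>B. fst b = X \<and> fst (snd b) = True}"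
      by auto
    moreover have "card ({b\<in>B. fst b = X \<and> fst (snd b) = False} \<union> {b\<in>B. fst b = X \<and> fst (snd b) = True}) = card {b\<in>B. fst b = X \<and> fst (snd b) = False} + card {b\<in>B. fst b = X \<and> fst (snd b) = True}"
      by (rule card_Un_disjoint) (use fB in auto)
    ultimately have "card {b\<in>B. fst b = X} = card {b\<in>B. fst b = X \<and> fst (snd b) = False} + card {b\<in>B. fst b = X \<and> fst (snd b) = True}"
      by simp
    then show ?thesis using cB[of X False] cB[of X True] by simp
  qed
  have "\<exists>h. bij_betw h {l. l < K} B \<and> (\<forall>a\<in>{l. l < K}. fst (h a) = c a m)"
    by (rule typed_bij) (use fB assms cB2 in auto)
  then obtain h where h: "bij_betw h {l. l < K} B" "\<forall>a\<in>{l. l < K}. fst (h a) = c a m" by blast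
  define c' where "c' l j = (if j = Suc m then fst (snd (h l)) else c l j)" for l j
  have "card {l. l < K \<and> c' l m = X \<and> c' l (Suc m) = Y} = f m X Y" for X Y
  proof -
    have "{l. l < K \<and> c' l m = X \<and> c' l (Suc m) = Y} = {l\<in>{l. l<K}. (\<lambda>b. fst b = X \<and> fst (snd b) = Y) (h l)}"
      using h(2) by (auto simp: c'_def)
    also have "card \<dots> = card {b\<in>B. fst b = X \<and> fst (snd b) = Y}"
      by (rule card_bij_pre[OF h(1)])
    finally show ?thesis using cB by simp
  qed
  then show ?thesis by (intro exI[of _ c']) (auto simp: c'_def)
qed

lemma decomp_aux:
  fixes f :: "nat \<Rightarrow> bool \<Rightarrow> bool \<Rightarrow> nat"
  assumes cons: "\<And>j Y. 0 < j \<Longrightarrow> j < n \<Longrightarrow> f (j-1) False Y + f (j-1) True Y = f j Y False + f j Y True"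
  shows "m < n \<Longrightarrow> \<exists>(K::nat) c. (\<forall>j<m. \<forall>X Y. card {l. l < K \<and> c l j = X \<and> c l (Suc j) = Y} = f j X Y)
     \<and> (\<forall>X. card {l. l < K \<and> c l m = X} = f m X False + f m X True)"
proof (induction m)
  case 0
  define B where "B = {(X,k). k < f 0 X False + f 0 X True}"
  have B: "B = (\<Union>X. {(X,k)| k. k < f 0 X False + f 0 X True})" unfolding B_def by auto
  have fB: "finite B" unfolding B by auto
  obtain h where h: "bij_betw h {0..<card B} B" using ex_bij_betw_nat_finite[OF fB] by blast
  have "card {l. l < card B \<and> fst (h l) = X} = f 0 X False + f 0 X True" for X
  proof -
    have "card {l. l < card B \<and> fst (h l) = X} = card {l\<in>{0..<card B}. fst (h l) = X}"
      by (rule arg_cong[where f=card]) auto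
    also have "\<dots> = card {b\<in>B. fst b = X}" by (rule card_bij_pre[OF h])
    also have "{b\<in>B. fst b = X} = (\<lambda>k. (X,k)) ` {..<f 0 X False + f 0 X True}" unfolding B_def by auto
    finally show ?thesis by (simp add: card_image inj_on_def)
  qed
  then show ?case by (intro exI[of _ "card B"] exI[of _ "\<lambda>l j. fst (h l)"]) auto
next
  case (Suc m)
  then obtain K :: nat and c :: "nat \<Rightarrow> nat \<Rightarrow> bool" where c: "\<forall>j<m. \<forall>X Y. card {l. l < K \<and> c l j = X \<and> c l (Suc j) = Y} = f j X Y"
     "\<forall>X. card {l. l < K \<and> c l m = X} = f m X False + f m X True" by auto
  obtain c' where c': "\<forall>l j. j \<le> m \<longrightarrow> c' l j = c l j"
     "\<forall>X Y. card {l. l < K \<and> c' l m = X \<and> c' l (Suc m) = Y} = f m X Y"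
    using ext_step[of K c m f] c(2) by blast
  have A: "\<forall>j<Suc m. \<forall>X Y. card {l. l < K \<and> c' l j = X \<and> c' l (Suc j) = Y} = f j X Y"
  proof (intro allI impI)
    fix j X Y assume j: "j < Suc m"
    show "card {l. l < K \<and> c' l j = X \<and> c' l (Suc j) = Y} = f j X Y"
    proof (cases "j = m")
      case True then show ?thesis using c'(2) by simp
    next
      case False
      then have "j < m" using j by simp
      then show ?thesis using c(1) c'(1) by simp
    qed
  qed
  have "card {l. l < K \<and> c' l (Suc m) = Y} = f (Suc m) Y False + f (Suc m) Y True" for Y
  proof -
    have "card {l. l < K \<and> c' l (Suc m) = Y} = card {l. l < K \<and> c' l (Suc m) = Y \<and> c' l m = False}
       + card {l. l < K \<and> c' l (Suc m) = Y \<and> c' l m = True}" by (rule card_split)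
    also have "\<dots> = f m False Y + f m True Y"
    proof -
      have e: "{l. l < K \<and> c' l (Suc m) = Y \<and> c' l m = X} = {l. l < K \<and> c' l m = X \<and> c' l (Suc m) = Y}" for X
        by auto
      show ?thesis unfolding e using c'(2)[rule_format, of False Y] c'(2)[rule_format, of True Y] by argo
    qed
    also have "\<dots> = f (Suc m) Y False + f (Suc m) Y True" using cons[of "Suc m" Y] Suc.prems by simp
    finally show ?thesis .
  qed
  with A show ?case by blast
qed

lemma decomp:
  fixes f :: "nat \<Rightarrow> bool \<Rightarrow> bool \<Rightarrow> nat"
  assumes "n \<ge> 1" and cons: "\<And>j Y. 0 < j \<Longrightarrow> j < n \<Longrightarrow> f (j-1) False Y + f (j-1) True Y = f j Y False + f j Y True"
  shows "\<exists>(K::nat) c. \<forall>j<n. \<forall>X Y. card {l. l < K \<and> c l j = X \<and> c l (Suc j) = Y} = f j X Y"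
proof -
  obtain K :: nat and c :: "nat \<Rightarrow> nat \<Rightarrow> bool" where c: "\<forall>j<n-1. \<forall>X Y. card {l. l < K \<and> c l j = X \<and> c l (Suc j) = Y} = f j X Y"
     "\<forall>X. card {l. l < K \<and> c l (n-1) = X} = f (n-1) X False + f (n-1) X True"
    using decomp_aux[where n=n and f=f and m="n-1", OF cons] assms(1) by auto
  obtain c' where c': "\<forall>l j. j \<le> n-1 \<longrightarrow> c' l j = c l j"
     "\<forall>X Y. card {l. l < K \<and> c' l (n-1) = X \<and> c' l (Suc (n-1)) = Y} = f (n-1) X Y"
    using ext_step[of K c "n-1" f] c(2) by blast
  have "\<forall>j<n. \<forall>X Y. card {l. l < K \<and> c' l j = X \<and> c' l (Suc j) = Y} = f j X Y"
  proof (intro allI impI)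
    fix j X Y assume j: "j < n"
    show "card {l. l < K \<and> c' l j = X \<and> c' l (Suc j) = Y} = f j X Y"
    proof (cases "j = n-1")
      case True then show ?thesis using c'(2) by simp
    next
      case False
      then have "j < n-1" using j by simp
      then show ?thesis using c(1) c'(1) by simp
    qed
  qed
  then show ?thesis by blast
qed


definition CS :: "nat \<Rightarrow> (nat \<Rightarrow> disk \<Rightarrow> nat) \<Rightarrow> bool" where
 "CS n N \<longleftrightarrow> (\<exists>(K::nat) (c::nat \<Rightarrow> nat \<Rightarrow> bool). (\<forall>l<K. c l 0 = c l n) \<and>
    (\<forall>j<n. \<forall>X Y. card {l. l < K \<and> c l j = X \<and> c l (Suc j) = Y} = N j (dk X Y)))"

lemma flow_paths:
  assumes "is_flow (G_edges n) (G_cap N) (U 0) (U n) P" "p \<in># P"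
  shows "length p = Suc n" "\<forall>i<Suc n. idx (p!i) = i" "p!0 = U 0" "p!n = U n"
proof -
  have s: "st_path (G_edges n) (U 0) (U n) p" using assms unfolding is_flow_def by auto
  show l: "length p = Suc n" using layered_path_len[OF s] .
  show "\<forall>i<Suc n. idx (p!i) = i" using layered_path[OF s] l by simp
  have ne: "p \<noteq> []" using l by auto
  show "p!0 = U 0" using s ne unfolding st_path_def by (metis hd_conv_nth)
  show "p!n = U n" using s ne l unfolding st_path_def by (metis last_conv_nth diff_Suc_1)
qed

lemma flow_le:
  assumes n: "n \<ge> 1" and f: "is_flow (G_edges n) (G_cap N) (U 0) (U n) P"
  shows "size P \<le> N 0 T0 + N 0 Q03"
proof -
  define c1 where "c1 p = count_list (path_edges p) (U 0, U 1)" for p :: "vert list"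
  define c2 where "c2 p = count_list (path_edges p) (U 0, W 1)" for p :: "vert list"
  have one: "c1 p + c2 p = 1" if "p \<in># P" for p
  proof -
    note fp = flow_paths[OF f that]
    have "c1 p = (if lt (p!0) = False \<and> lt (p!Suc 0) = False then 1 else 0)"
      unfolding c1_def using cnt_layered[OF fp(1) fp(2), of 0 False False] n by (simp add: mkv_def)
    moreover have "c2 p = (if lt (p!0) = False \<and> lt (p!Suc 0) = True then 1 else 0)"
      unfolding c2_def using cnt_layered[OF fp(1) fp(2), of 0 False True] n by (simp add: mkv_def)
    ultimately show ?thesis using fp(3) by auto
  qed
  have e1: "(U 0, U 1) \<in> G_edges n" "(U 0, W 1) \<in> G_edges n" using n by (auto simp: G_edges_iff)
  have "size P = (\<Sum>p\<in>#P. 1)" by (rule size_eq_sum_mset)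
  also have "\<dots> = (\<Sum>p\<in>#P. c1 p + c2 p)" using one by (intro arg_cong[where f=sum_mset] image_mset_cong) auto
  also have "\<dots> = (\<Sum>p\<in>#P. c1 p) + (\<Sum>p\<in>#P. c2 p)" by (rule sum_mset.distrib)
  also have "\<dots> \<le> G_cap N (U 0, U 1) + G_cap N (U 0, W 1)"
    using f e1 unfolding is_flow_def c1_def c2_def by (intro add_mono) auto
  also have "\<dots> = N 0 T0 + N 0 Q03" by simp
  finally show ?thesis .
qed

lemma sum_ind: "finite A \<Longrightarrow> (\<Sum>l\<in>A. if Q l then 1 else 0) = card {l\<in>A. Q l}"
  by (simp add: sum.inter_filter[symmetric])

lemma CS_flow:
  assumes n: "n \<ge> 1" and cs: "CS n N"
  shows "\<exists>P. is_flow (G_edges n) (G_cap N) (U 0) (U n) P \<and> size P = N 0 T0 + N 0 Q03"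
proof -
  obtain K :: nat and c :: "nat \<Rightarrow> nat \<Rightarrow> bool" where c: "\<forall>l<K. c l 0 = c l n"
    "\<forall>j<n. \<forall>X Y. card {l. l < K \<and> c l j = X \<and> c l (Suc j) = Y} = N j (dk X Y)"
    using cs unfolding CS_def by blast
  define L0 where "L0 = {l. l < K \<and> c l 0 = False}"
  define po where "po l = map (\<lambda>j. mkv (c l j) j) [0..<Suc n]" for l
  define P where "P = image_mset po (mset_set L0)"
  have fL: "finite L0" unfolding L0_def by auto
  have lpo: "length (po l) = Suc n" "\<forall>i<Suc n. idx (po l ! i) = i" for l
    unfolding po_def by (auto simp del: upt_Suc)
  have pe: "path_edges (po l) = map (\<lambda>i. (po l!i, po l!Suc i)) [0..<n]" for l
    using path_edges_nth[of "po l"] lpo by simp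
  have sp: "st_path (G_edges n) (U 0) (U n) (po l)" if "l \<in> L0" for l
  proof -
    have "c l 0 = False" "c l n = False" using that c(1) unfolding L0_def by auto
    then have "hd (po l) = U 0" "last (po l) = U n"
      unfolding po_def by (auto simp: mkv_def hd_map last_map simp del: upt_Suc)
    moreover have "set (path_edges (po l)) \<subseteq> G_edges n"
      unfolding pe using lpo by (auto simp: G_edges_iff)
    moreover have "po l \<noteq> []" using lpo(1)[of l] by auto
    ultimately show ?thesis unfolding st_path_def by auto
  qed
  have sumP: "(\<Sum>p\<in>#P. g p) = (\<Sum>l\<in>L0. g (po l))" for g :: "vert list \<Rightarrow> nat"
    unfolding P_def by (simp add: sum_unfold_sum_mset image_mset.compositionality comp_def)
  have cap: "(\<Sum>p\<in>#P. count_list (path_edges p) a) \<le> G_cap N a" if "a \<in> G_edges n" for a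
  proof -
    obtain x y where a: "a = (x,y)" by fastforce
    have xy: "idx y = Suc (idx x)" "idx x < n" using that a by (auto simp: G_edges_iff)
    define j where "j = idx x"
    have ax: "a = (mkv (lt x) j, mkv (lt y) (Suc j))" using a xy vert_eq unfolding j_def by metis
    have "(\<Sum>p\<in>#P. count_list (path_edges p) a) = (\<Sum>l\<in>L0. if c l j = lt x \<and> c l (Suc j) = lt y then 1 else 0)"
      unfolding sumP ax
    proof (rule sum.cong[OF refl])
      fix l assume "l \<in> L0"
      show "count_list (path_edges (po l)) (mkv (lt x) j, mkv (lt y) (Suc j)) =
         (if c l j = lt x \<and> c l (Suc j) = lt y then 1 else 0)"
        using cnt_layered[OF lpo(1)[of l] lpo(2)[of l], of j "lt x" "lt y"] xy unfolding j_def
        by (simp add: po_def del: upt_Suc)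
    qed
    also have "\<dots> = card {l\<in>L0. c l j = lt x \<and> c l (Suc j) = lt y}" by (rule sum_ind[OF fL])
    also have "\<dots> \<le> card {l. l < K \<and> c l j = lt x \<and> c l (Suc j) = lt y}"
      by (rule card_mono) (auto simp: L0_def)
    also have "\<dots> = N j (dk (lt x) (lt y))" using c(2) xy unfolding j_def by auto
    also have "\<dots> = G_cap N a" using G_cap_eq[OF xy(1)] a unfolding j_def by simp
    finally show ?thesis .
  qed
  have "is_flow (G_edges n) (G_cap N) (U 0) (U n) P"
    unfolding is_flow_def using cap sp fL by (auto simp: P_def)
  moreover have "size P = N 0 T0 + N 0 Q03"
  proof -
    have "size P = card L0" unfolding P_def by simp
    also have "\<dots> = card {l. l < K \<and> c l 0 = False \<and> c l (Suc 0) = False} + card {l. l < K \<and> c l 0 = False \<and> c l (Suc 0) = True}"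
      unfolding L0_def by (rule card_split)
    also have "\<dots> = N 0 T0 + N 0 Q03" using c(2)[rule_format, of 0 False False] c(2)[rule_format, of 0 False True] n
      by simp
    finally show ?thesis .
  qed
  ultimately show ?thesis by blast
qed


definition Dm :: "(nat \<Rightarrow> disk \<Rightarrow> nat) \<Rightarrow> nat \<Rightarrow> (disk \<times> nat) set" where
  "Dm N j = {(d,k). meets_e d \<and> k < N j d}"

lemma UNIV_disk: "(UNIV :: disk set) = {T0,T1,T2,T3,Q01,Q02,Q03}"
  using disk.exhaust by auto

lemma finite_disk: "finite (UNIV :: disk set)" by (simp add: UNIV_disk)

lemma finite_dset: fixes N :: "nat \<Rightarrow> disk \<Rightarrow> nat" shows "finite {(d,k). k < N j d \<and> P d}"
proof -
  have "{(d,k). k < N j d \<and> P d} \<subseteq> (\<Union>d\<in>UNIV. (\<lambda>k. (d,k)) ` {..<N j d})" by auto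
  moreover have "finite (\<Union>d\<in>UNIV. (\<lambda>k. (d,k)) ` {..<N j d})"
    by (rule finite_UN_I) (auto simp: finite_disk)
  ultimately show ?thesis by (rule finite_subset)
qed

lemma finite_Dm: "finite (Dm N j)"
  unfolding Dm_def using finite_dset[of N j meets_e] by (simp add: conj_commute)

lemma card_Dm_type: "meets_e d \<Longrightarrow> card {y\<in>Dm N j. fst y = d} = N j d"
proof -
  assume "meets_e d"
  then have "{y\<in>Dm N j. fst y = d} = (\<lambda>k. (d,k)) ` {..<N j d}" unfolding Dm_def by auto
  then show ?thesis by (simp add: card_image inj_on_def)
qed

lemma dk_iff: "meets_e d \<Longrightarrow> (d = dk X Y \<longleftrightarrow> (arc_prev d = Some 1) = X \<and> (arc_next d = Some 1) = Y)"
  by (cases d; cases X; cases Y) (auto simp: meets_e_def)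

lemma imm_CS:
  assumes "immersible n N"
  shows "CS n N"
proof -
  obtain \<sigma> where gg: "global_gluing n N \<sigma>" and im: "immersed_gluing n N \<sigma>"
    using assms unfolding immersible_def by blast
  have bijD: "bij_betw (\<sigma> i) (Dm N i) (Dm N ((i+1) mod n))" if i: "i < n" for i
  proof -
    have b: "bij_betw (\<sigma> i) (disks_next N i) (disks_prev N ((i+1) mod n))"
       and ar: "\<forall>x\<in>disks_next N i. arc_prev (fst (\<sigma> i x)) = arc_next (fst x)"
      using gg i unfolding global_gluing_def by auto
    have sub: "Dm N i \<subseteq> disks_next N i" unfolding Dm_def disks_next_def using meets_next by fastforce
    have inj: "inj_on (\<sigma> i) (Dm N i)" using b sub unfolding bij_betw_def by (auto intro: inj_on_subset)
    have "\<sigma> i ` Dm N i = Dm N ((i+1) mod n)"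
    proof
      show "\<sigma> i ` Dm N i \<subseteq> Dm N ((i+1) mod n)"
      proof
        fix y assume "y \<in> \<sigma> i ` Dm N i"
        then obtain x where x: "x \<in> Dm N i" "y = \<sigma> i x" by auto
        then have "y \<in> disks_prev N ((i+1) mod n)" using b sub unfolding bij_betw_def by auto
        moreover have "arc_prev (fst y) = arc_next (fst x)" using ar x sub by auto
        moreover have "meets_e (fst x)" using x unfolding Dm_def by auto
        ultimately have "meets_e (fst y)" "y \<in> disks_prev N ((i+1) mod n)"
          by (metis meets_next meets_prev)+
        then show "y \<in> Dm N ((i+1) mod n)" unfolding Dm_def disks_prev_def by auto
      qed
      show "Dm N ((i+1) mod n) \<subseteq> \<sigma> i ` Dm N i"
      proof
        fix y assume y: "y \<in> Dm N ((i+1) mod n)"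
        then have "y \<in> disks_prev N ((i+1) mod n)" unfolding Dm_def disks_prev_def using meets_prev by fastforce
        then obtain x where x: "x \<in> disks_next N i" "y = \<sigma> i x" using b unfolding bij_betw_def by blast
        then have "arc_next (fst x) = arc_prev (fst y)" using ar by auto
        moreover have "meets_e (fst y)" using y unfolding Dm_def by auto
        ultimately have "meets_e (fst x)" by (metis meets_next meets_prev)
        then have "x \<in> Dm N i" using x unfolding Dm_def disks_next_def by auto
        then show "y \<in> \<sigma> i ` Dm N i" using x by auto
      qed
    qed
    then show ?thesis using inj unfolding bij_betw_def by auto
  qed
  have walkbij: "j < n \<Longrightarrow> bij_betw (walk \<sigma> j) (Dm N 0) (Dm N j)" for j
  proof (induction j)
    case 0
    have "walk \<sigma> 0 = id" by auto
    then show ?case using bij_betw_id[of "Dm N 0"] by metis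
  next
    case (Suc j)
    have "walk \<sigma> (Suc j) = \<sigma> j \<circ> walk \<sigma> j" by auto
    moreover have "bij_betw (\<sigma> j) (Dm N j) (Dm N (Suc j))" using bijD[of j] Suc.prems by simp
    moreover have "bij_betw (walk \<sigma> j) (Dm N 0) (Dm N j)" using Suc by simp
    ultimately show ?case by (metis bij_betw_trans)
  qed
  obtain h where h: "bij_betw h {0..<card (Dm N 0)} (Dm N 0)"
    using ex_bij_betw_nat_finite[OF finite_Dm] by blast
  define K where "K = card (Dm N 0)"
  define c where "c l j = (arc_prev (fst (walk \<sigma> j (h l))) = Some 1)" for l j
  have c0: "c l 0 = c l n" if "l < K" for l
  proof -
    have "h l \<in> Dm N 0" using h that unfolding K_def bij_betw_def by auto
    then have "walk \<sigma> n (h l) = h l" using im unfolding immersed_gluing_def Dm_def by auto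
    then show ?thesis unfolding c_def by simp
  qed
  have cnt: "card {l. l < K \<and> c l j = X \<and> c l (Suc j) = Y} = N j (dk X Y)" if j: "j < n" for j X Y
  proof -
    define g where "g = walk \<sigma> j \<circ> h"
    have gb: "bij_betw g {0..<K} (Dm N j)" unfolding g_def K_def using h walkbij[OF j] by (rule bij_betw_trans)
    have ar: "\<forall>x\<in>disks_next N j. arc_prev (fst (\<sigma> j x)) = arc_next (fst x)"
      using gg j unfolding global_gluing_def by auto
    have "{l. l < K \<and> c l j = X \<and> c l (Suc j) = Y} = {l\<in>{0..<K}. fst (g l) = dk X Y}"
    proof (rule Collect_cong)
      fix l
      show "(l < K \<and> c l j = X \<and> c l (Suc j) = Y) = (l \<in> {0..<K} \<and> fst (g l) = dk X Y)"
      proof (cases "l < K")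
        case True
        then have gl: "g l \<in> Dm N j" using gb unfolding bij_betw_def by auto
        then have m: "meets_e (fst (g l))" and dn: "g l \<in> disks_next N j"
          unfolding Dm_def disks_next_def using meets_next by fastforce+
        have "c l (Suc j) = (arc_next (fst (g l)) = Some 1)"
          using ar dn unfolding c_def g_def by simp
        then show ?thesis using dk_iff[OF m, of X Y] True unfolding c_def g_def by auto
      qed auto
    qed
    also have "card \<dots> = card {y\<in>Dm N j. fst y = dk X Y}" by (rule card_bij_pre[OF gb])
    also have "\<dots> = N j (dk X Y)" by (rule card_Dm_type) simp
    finally show ?thesis .
  qed
  show ?thesis unfolding CS_def using c0 cnt by blast
qed


lemma card_dset: fixes N :: "nat \<Rightarrow> disk \<Rightarrow> nat" shows "card {(d,k). k < N i d \<and> d \<in> S} = (\<Sum>d\<in>S. N i d)"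
proof -
  have fS: "finite S" using finite_disk by (metis finite_subset subset_UNIV)
  have "{(d,k). k < N i d \<and> d \<in> S} = (\<Union>d\<in>S. (\<lambda>k. (d,k)) ` {..<N i d})" by auto
  moreover have "card (\<Union>d\<in>S. (\<lambda>k. (d,k)) ` {..<N i d}) = (\<Sum>d\<in>S. card ((\<lambda>k. (d,k)) ` {..<N i d}))"
    by (rule card_UN_disjoint) (use fS in auto)
  moreover have "card ((\<lambda>k. (d,k)) ` {..<N i d}) = N i d" for d by (simp add: card_image inj_on_def)
  ultimately show ?thesis by simp
qed

lemma next_cases: "arc_next d \<noteq> None \<longleftrightarrow> meets_e d \<or> arc_next d = Some 2"
  by (cases d) (auto simp: meets_e_def)
lemma prev_cases: "arc_prev d \<noteq> None \<longleftrightarrow> meets_e d \<or> arc_prev d = Some 2"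
  by (cases d) (auto simp: meets_e_def)
lemma meets_not2: "meets_e d \<Longrightarrow> arc_next d \<noteq> Some 2 \<and> arc_prev d \<noteq> Some 2"
  by (cases d) (auto simp: meets_e_def)

lemma CS_imm:
  assumes n: "n \<ge> 1" and mt: "matching n N" and cs: "CS n N"
  shows "immersible n N"
proof -
  obtain K :: nat and c :: "nat \<Rightarrow> nat \<Rightarrow> bool" where c: "\<forall>l<K. c l 0 = c l n"
    "\<forall>j<n. \<forall>X Y. card {l. l < K \<and> c l j = X \<and> c l (Suc j) = Y} = N j (dk X Y)"
    using cs unfolding CS_def by blast
  define KS where "KS = {l::nat. l < K}"
  define tpp where "tpp j l = dk (c l j) (c l (Suc j))" for j l
  define \<nu> where "\<nu> j = (SOME h. bij_betw h KS (Dm N j) \<and> (\<forall>l\<in>KS. fst (h l) = tpp j l))" for j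
  have \<nu>: "bij_betw (\<nu> j) KS (Dm N j) \<and> (\<forall>l\<in>KS. fst (\<nu> j l) = tpp j l)" if j: "j < n" for j
  proof -
    have "\<exists>h. bij_betw h KS (Dm N j) \<and> (\<forall>l\<in>KS. fst (h l) = tpp j l)"
    proof (rule typed_bij)
      show "finite KS" "finite (Dm N j)" unfolding KS_def by (auto simp: finite_Dm)
      fix d
      show "card {a \<in> KS. tpp j a = d} = card {b \<in> Dm N j. fst b = d}"
      proof (cases "meets_e d")
        case True
        then obtain X Y where d: "d = dk X Y" using meets_e_dk by blast
        have "{a \<in> KS. tpp j a = d} = {l. l < K \<and> c l j = X \<and> c l (Suc j) = Y}"
          unfolding KS_def tpp_def d by auto
        then show ?thesis using c(2) j card_Dm_type[OF True] d by simp
      next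
        case False
        then have e1: "{a \<in> KS. tpp j a = d} = {}" and e2: "{b \<in> Dm N j. fst b = d} = {}"
          unfolding tpp_def Dm_def by auto
        show ?thesis by (simp add: e1 e2)
      qed
    qed
    then show ?thesis unfolding \<nu>_def by (rule someI_ex)
  qed
  define En where "En i = {x\<in>disks_next N i. arc_next (fst x) = Some 2}" for i
  define Ep where "Ep i = {x\<in>disks_prev N i. arc_prev (fst x) = Some 2}" for i
  define \<rho> where "\<rho> i = (SOME h. bij_betw h (En i) (Ep ((i+1) mod n)))" for i
  have \<rho>: "bij_betw (\<rho> i) (En i) (Ep ((i+1) mod n))" if i: "i < n" for i
  proof -
    have En: "En i = {(d,k). k < N i d \<and> d \<in> {d. arc_next d = Some 2}}"
      unfolding En_def disks_next_def by auto
    have Ep: "Ep ((i+1) mod n) = {(d,k). k < N ((i+1) mod n) d \<and> d \<in> {d. arc_prev d = Some 2}}"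
      unfolding Ep_def disks_prev_def by auto
    have "card (En i) = card (Ep ((i+1) mod n))"
      unfolding En Ep card_dset using mt[unfolded matching_def, rule_format, OF i, of 2] by simp
    moreover have "finite (En i)" "finite (Ep ((i+1) mod n))" unfolding En Ep by (rule finite_dset)+
    ultimately have "\<exists>h. bij_betw h (En i) (Ep ((i+1) mod n))" by (intro finite_same_card_bij) auto
    then show ?thesis unfolding \<rho>_def by (rule someI_ex)
  qed
  define \<sigma> where "\<sigma> i x = (if x \<in> Dm N i then \<nu> ((i+1) mod n) (inv_into KS (\<nu> i) x) else \<rho> i x)" for i x
  have cmod: "c l ((Suc i) mod n) = c l (Suc i)" if "l < K" "i < n" for l i
  proof (cases "Suc i < n")
    case True then show ?thesis by simp
  next
    case False
    then have "Suc i = n" using that by simp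
    then show ?thesis using c(1) that by simp
  qed
  have gg: "global_gluing n N \<sigma>"
    unfolding global_gluing_def
  proof (intro allI impI conjI)
    fix i assume i: "i < n"
    define i' where "i' = (i+1) mod n"
    have i': "i' < n" unfolding i'_def using n by simp
    have dn: "disks_next N i = Dm N i \<union> En i"
      unfolding disks_next_def Dm_def En_def using next_cases by auto
    have dp: "disks_prev N i' = Dm N i' \<union> Ep i'"
      unfolding disks_prev_def Dm_def Ep_def using prev_cases by auto
    have b1: "bij_betw (\<nu> i' \<circ> inv_into KS (\<nu> i)) (Dm N i) (Dm N i')"
      using \<nu>[OF i] \<nu>[OF i'] by (auto intro: bij_betw_trans bij_betw_inv_into)
    have b1': "bij_betw (\<sigma> i) (Dm N i) (Dm N i')"
    proof (rule bij_betw_cong[THEN iffD1, OF _ b1])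
      fix x assume "x \<in> Dm N i"
      then show "(\<nu> i' \<circ> inv_into KS (\<nu> i)) x = \<sigma> i x" unfolding \<sigma>_def i'_def by simp
    qed
    have dis: "Dm N i \<inter> En i = {}" "Dm N i' \<inter> Ep i' = {}"
      unfolding Dm_def En_def Ep_def using meets_not2 by auto
    have r: "bij_betw (\<rho> i) (En i) (Ep i')" using \<rho>[OF i] unfolding i'_def .
    have b2': "bij_betw (\<sigma> i) (En i) (Ep i')"
    proof (rule bij_betw_cong[THEN iffD1, OF _ r])
      fix x assume "x \<in> En i"
      then have "x \<notin> Dm N i" using dis(1) by blast
      then show "\<rho> i x = \<sigma> i x" unfolding \<sigma>_def by simp
    qed
    have "bij_betw (\<sigma> i) (disks_next N i) (disks_prev N i')"
      unfolding dn dp by (rule bij_betw_combine[OF b1' b2' dis(2)])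
    then show "bij_betw (\<sigma> i) (disks_next N i) (disks_prev N ((i+1) mod n))"
      unfolding i'_def .
    show "\<forall>x\<in>disks_next N i. arc_prev (fst (\<sigma> i x)) = arc_next (fst x)"
    proof
      fix x assume "x \<in> disks_next N i"
      then consider "x \<in> Dm N i" | "x \<in> En i" using dn by auto
      then show "arc_prev (fst (\<sigma> i x)) = arc_next (fst x)"
      proof cases
        case 1
        define l where "l = inv_into KS (\<nu> i) x"
        have l: "l \<in> KS" "\<nu> i l = x" using \<nu>[OF i] 1 unfolding l_def bij_betw_def
          by (auto intro: inv_into_into f_inv_into_f)
        have "fst x = tpp i l" using \<nu>[OF i] l by auto
        moreover have "fst (\<sigma> i x) = tpp i' l" using \<nu>[OF i'] l 1 unfolding \<sigma>_def l_def i'_def by auto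
        moreover have "c l i' = c l (Suc i)" using cmod l i unfolding i'_def KS_def by simp
        ultimately show ?thesis unfolding tpp_def by simp
      next
        case 2
        then have "\<sigma> i x = \<rho> i x" using dis unfolding \<sigma>_def by auto
        then have "\<sigma> i x \<in> Ep i'" using \<rho>[OF i] 2 unfolding bij_betw_def i'_def by auto
        then show ?thesis using 2 unfolding Ep_def En_def by auto
      qed
    qed
  qed
  have walk: "j \<le> n \<Longrightarrow> walk \<sigma> j x = \<nu> (j mod n) (inv_into KS (\<nu> 0) x)" if x: "x \<in> Dm N 0" for j x
  proof (induction j)
    case 0
    have "x \<in> \<nu> 0 ` KS" using \<nu>[of 0] n x unfolding bij_betw_def by auto
    then show ?case using n by (simp add: f_inv_into_f)
  next
    case (Suc j)
    then have j: "j < n" by simp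
    define l where "l = inv_into KS (\<nu> 0) x"
    have lK: "l \<in> KS" using \<nu>[of 0] n x unfolding l_def bij_betw_def by (auto intro: inv_into_into)
    have "walk \<sigma> (Suc j) x = \<sigma> j (\<nu> j l)" using Suc j unfolding l_def by simp
    also have "\<dots> = \<nu> ((j+1) mod n) (inv_into KS (\<nu> j) (\<nu> j l))"
      using \<nu>[OF j] lK unfolding \<sigma>_def bij_betw_def by auto
    also have "\<dots> = \<nu> (Suc j mod n) l"
      using \<nu>[OF j] lK unfolding bij_betw_def by (simp add: inv_into_f_f)
    finally show ?case unfolding l_def .
  qed
  have "immersed_gluing n N \<sigma>"
    unfolding immersed_gluing_def
  proof (intro allI impI)
    fix d k assume "meets_e d \<and> k < N 0 d"
    then have x: "(d,k) \<in> Dm N 0" unfolding Dm_def by auto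
    have "(d,k) \<in> \<nu> 0 ` KS" using \<nu>[of 0] n x unfolding bij_betw_def by auto
    then show "walk \<sigma> n (d,k) = (d,k)" using walk[OF x, of n] by (simp add: f_inv_into_f)
  qed
  then show ?thesis unfolding immersible_def using gg by blast
qed


lemma next0: "{d. arc_next d = Some 0} = {T0, Q02}" by (rule set_eqI, case_tac x) auto
lemma next1: "{d. arc_next d = Some (Suc 0)} = {T1, Q03}" by (rule set_eqI, case_tac x) auto
lemma prev0: "{d. arc_prev d = Some 0} = {T0, Q03}" by (rule set_eqI, case_tac x) auto
lemma prev1: "{d. arc_prev d = Some (Suc 0)} = {T1, Q02}" by (rule set_eqI, case_tac x) auto

lemma match_cons:
  assumes mt: "matching n N" and i: "i < n"
  shows "N i (dk False Y) + N i (dk True Y) = N ((i+1) mod n) (dk Y False) + N ((i+1) mod n) (dk Y True)"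
proof (cases Y)
  case True
  then show ?thesis using mt[unfolded matching_def, rule_format, OF i, of 1] by (simp add: next1 prev1)
next
  case False
  then show ?thesis using mt[unfolded matching_def, rule_format, OF i, of 0] by (simp add: next0 prev0)
qed

lemma flow_CS:
  assumes n: "n \<ge> 1" and mt: "matching n N"
    and f: "is_flow (G_edges n) (G_cap N) (U 0) (U n) P" and sz: "size P = N 0 T0 + N 0 Q03"
  shows "CS n N"
proof -
  define a where "a = N 0 T0 + N 0 Q03"
  obtain ps where ps: "mset ps = P" using ex_mset by blast
  have la: "length ps = a" using sz ps unfolding a_def by (metis size_mset)
  have pin: "ps!l \<in># P" if "l < a" for l using that la ps by (metis nth_mem set_mset_mset)
  note fp = flow_paths[OF f pin]
  define cu where "cu l j = lt (ps!l!j)" for l j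
  define m where "m j X Y = card {l. l < a \<and> cu l j = X \<and> cu l (Suc j) = Y}" for j X Y
  have m_le: "m j X Y \<le> N j (dk X Y)" if j: "j < n" for j X Y
  proof -
    define e where "e = (mkv X j, mkv Y (Suc j))"
    have eG: "e \<in> G_edges n" unfolding e_def using j by (simp add: G_edges_iff)
    have "(\<Sum>p\<in>#P. count_list (path_edges p) e) = (\<Sum>l\<in>{0..<a}. count_list (path_edges (ps!l)) e)"
      unfolding ps[symmetric] by (simp add: mset_map[symmetric] sum_mset_sum_list sum_list_sum_nth la del: mset_map)
    also have "\<dots> = (\<Sum>l\<in>{0..<a}. if cu l j = X \<and> cu l (Suc j) = Y then 1 else 0)"
    proof (rule sum.cong[OF refl])
      fix l assume "l \<in> {0..<a}"
      then have "l < a" by simp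
      show "count_list (path_edges (ps!l)) e = (if cu l j = X \<and> cu l (Suc j) = Y then 1 else 0)"
        unfolding e_def cu_def using cnt_layered[OF fp(1)[OF \<open>l<a\<close>] fp(2)[OF \<open>l<a\<close>] j] by simp
    qed
    also have "\<dots> = card {l\<in>{0..<a}. cu l j = X \<and> cu l (Suc j) = Y}" by (rule sum_ind) simp
    also have "\<dots> = m j X Y" unfolding m_def by (rule arg_cong[where f=card]) auto
    finally have "m j X Y = (\<Sum>p\<in>#P. count_list (path_edges p) e)" by simp
    also have "\<dots> \<le> G_cap N e" using f eG unfolding is_flow_def by auto
    also have "\<dots> = N j (dk X Y)" unfolding e_def by (subst G_cap_eq) auto
    finally show ?thesis .
  qed
  have m_in: "m k False Y + m k True Y = card {l. l < a \<and> cu l (Suc k) = Y}" for k Y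
  proof -
    have e: "{l. l < a \<and> cu l (Suc k) = Y \<and> cu l k = X} = {l. l < a \<and> cu l k = X \<and> cu l (Suc k) = Y}" for X
      by auto
    show ?thesis unfolding m_def e[of False, symmetric] e[of True, symmetric] by (rule card_split[symmetric])
  qed
  have m_out: "m j Y False + m j Y True = card {l. l < a \<and> cu l j = Y}" for j Y
    unfolding m_def by (rule card_split[symmetric])
  define r where "r j X Y = N j (dk X Y) - m j X Y" for j X Y
  have cons: "r (j-1) False Y + r (j-1) True Y = r j Y False + r j Y True" if j: "0 < j" "j < n" for j Y
  proof -
    have "N (j-1) (dk False Y) + N (j-1) (dk True Y) = N j (dk Y False) + N j (dk Y True)"
      using match_cons[OF mt, of "j-1" Y] j by simp
    moreover have "m (j-1) False Y + m (j-1) True Y = m j Y False + m j Y True" using m_in[of "j-1" Y] m_out j(1) by simp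
    moreover have "m (j-1) X Y \<le> N (j-1) (dk X Y)" "m j Y X \<le> N j (dk Y X)" for X using m_le j by auto
    ultimately show ?thesis unfolding r_def
      using m_le[of "j-1" False Y] m_le[of "j-1" True Y] m_le[of j Y False] m_le[of j Y True] j by linarith
  qed
  have c0: "cu l 0 = False" "cu l n = False" if "l < a" for l
    using fp(3)[OF that] fp(4)[OF that] unfolding cu_def by auto
  have r0: "r 0 False Y = 0" for Y
  proof -
    have "{l. l < a \<and> cu l 0 = False} = {l. l < a}" using c0 by auto
    then have "card {l. l < a \<and> cu l 0 = False} = a" by simp
    then have "m 0 False False + m 0 False True = N 0 (dk False False) + N 0 (dk False True)"
      using m_out[of 0 False] unfolding a_def by simp
    then show ?thesis unfolding r_def using m_le[of 0 False False] m_le[of 0 False True] n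
      by (cases Y) auto
  qed
  have rn: "r (n-1) X False = 0" for X
  proof -
    have "{l. l < a \<and> cu l n = False} = {l. l < a}" using c0 by auto
    then have "card {l. l < a \<and> cu l n = False} = a" by simp
    then have "m (n-1) False False + m (n-1) True False = a" using m_in[of "n-1" False] n by simp
    moreover have "N (n-1) (dk False False) + N (n-1) (dk True False) = a"
      using match_cons[OF mt, of "n-1" False] n unfolding a_def by simp
    ultimately show ?thesis unfolding r_def using m_le[of "n-1" False False] m_le[of "n-1" True False] n
      by (cases X) auto
  qed
  obtain K' :: nat and c' :: "nat \<Rightarrow> nat \<Rightarrow> bool" where
    c': "\<forall>j<n. \<forall>X Y. card {l. l < K' \<and> c' l j = X \<and> c' l (Suc j) = Y} = r j X Y"
    using decomp[OF n, of r] cons by blast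
  have c'0: "c' l 0 = True" if "l < K'" for l
  proof (rule ccontr)
    assume "c' l 0 \<noteq> True"
    define S where "S = {l'. l' < K' \<and> c' l' 0 = False \<and> c' l' (Suc 0) = c' l (Suc 0)}"
    have "l \<in> S" using that \<open>c' l 0 \<noteq> True\<close> unfolding S_def by simp
    moreover have "card S = 0"
      using c'[rule_format, of 0 False "c' l (Suc 0)"] r0 n unfolding S_def by simp
    moreover have "finite S" unfolding S_def by simp
    ultimately show False by (simp add: card_0_eq)
  qed
  have c'n: "c' l n = True" if "l < K'" for l
  proof (rule ccontr)
    assume "c' l n \<noteq> True"
    define S where "S = {l'. l' < K' \<and> c' l' (n-1) = c' l (n-1) \<and> c' l' (Suc (n-1)) = False}"
    have "l \<in> S" using that n \<open>c' l n \<noteq> True\<close> unfolding S_def by simp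
    moreover have "card S = 0"
      using c'[rule_format, of "n-1" "c' l (n-1)" False] rn n unfolding S_def by simp
    moreover have "finite S" unfolding S_def by simp
    ultimately show False by (simp add: card_0_eq)
  qed
  define c where "c l = (if l < a then cu l else c' (l - a))" for l
  have "\<forall>l<a+K'. c l 0 = c l n" unfolding c_def using c0 c'0 c'n by auto
  moreover have "\<forall>j<n. \<forall>X Y. card {l. l < a + K' \<and> c l j = X \<and> c l (Suc j) = Y} = N j (dk X Y)"
  proof (intro allI impI)
    fix j X Y assume j: "j < n"
    define P1 where "P1 l = (cu l j = X \<and> cu l (Suc j) = Y)" for l
    define Q1 where "Q1 l = (c' l j = X \<and> c' l (Suc j) = Y)" for l
    have e: "{l. l < a + K' \<and> c l j = X \<and> c l (Suc j) = Y} =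
      {l. l < a + K' \<and> (if l < a then P1 l else Q1 (l - a))}"
      unfolding c_def P1_def Q1_def by auto
    have "card {l. l < a + K' \<and> c l j = X \<and> c l (Suc j) = Y} = card {l. l < a \<and> P1 l} + card {l. l < K' \<and> Q1 l}"
      unfolding e by (rule card_combine)
    also have "\<dots> = m j X Y + r j X Y"
      unfolding m_def P1_def Q1_def using c' j by simp
    finally have "card {l. l < a + K' \<and> c l j = X \<and> c l (Suc j) = Y} = m j X Y + r j X Y" .
    then show "card {l. l < a + K' \<and> c l j = X \<and> c l (Suc j) = Y} = N j (dk X Y)"
      unfolding r_def using m_le[OF j] by simp
  qed
  ultimately show ?thesis unfolding CS_def by blast
qed

theorem lemma13:
  fixes n :: nat and N :: "nat \<Rightarrow> disk \<Rightarrow> nat"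
  assumes "n \<ge> 1"
    and "matching n N"
  shows "immersible n N \<longleftrightarrow>
    max_flow (G_edges n) (G_cap N) (U 0) (U n) =
      (\<Sum>a\<in>{a\<in>G_edges n. fst a = U 0}. G_cap N a)"
proof -
  have S: "{a\<in>G_edges n. fst a = U 0} = {(U 0, U 1), (U 0, W 1)}"
  proof
    show "{a\<in>G_edges n. fst a = U 0} \<subseteq> {(U 0, U 1), (U 0, W 1)}"
    proof
      fix e assume "e \<in> {a\<in>G_edges n. fst a = U 0}"
      then obtain y where e: "e = (U 0, y)" "idx y = 1" by (cases e) (auto simp: G_edges_iff)
      then show "e \<in> {(U 0, U 1), (U 0, W 1)}" by (cases y) auto
    qed
    show "{(U 0, U 1), (U 0, W 1)} \<subseteq> {a\<in>G_edges n. fst a = U 0}" using assms(1) by (auto simp: G_edges_iff)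
  qed
  define a where "a = N 0 T0 + N 0 Q03"
  have sum: "(\<Sum>a\<in>{a\<in>G_edges n. fst a = U 0}. G_cap N a) = a" unfolding S a_def by simp
  define F where "F = {size P | P. is_flow (G_edges n) (G_cap N) (U 0) (U n) P}"
  have Fle: "\<forall>x\<in>F. x \<le> a" unfolding F_def a_def using flow_le[OF assms(1)] by auto
  have fF: "finite F" using Fle by (meson finite_atMost finite_subset atMost_iff subsetI)
  have "is_flow (G_edges n) (G_cap N) (U 0) (U n) {#}" unfolding is_flow_def by simp
  then have neF: "F \<noteq> {}" unfolding F_def by auto
  have mf: "max_flow (G_edges n) (G_cap N) (U 0) (U n) = a \<longleftrightarrow> a \<in> F"
  proof
    assume "max_flow (G_edges n) (G_cap N) (U 0) (U n) = a"
    then have "Max F = a" unfolding max_flow_def F_def by simp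
    then show "a \<in> F" using Max_in[OF fF neF] by simp
  next
    assume "a \<in> F"
    then have "Max F = a" using Fle fF by (intro Max_eqI) auto
    then show "max_flow (G_edges n) (G_cap N) (U 0) (U n) = a" unfolding max_flow_def F_def by simp
  qed
  have "immersible n N \<longleftrightarrow> a \<in> F"
  proof
    assume "immersible n N"
    then have "CS n N" by (rule imm_CS)
    then show "a \<in> F" using CS_flow[OF assms(1)] unfolding F_def a_def by force
  next
    assume "a \<in> F"
    then obtain P where "is_flow (G_edges n) (G_cap N) (U 0) (U n) P" "size P = a" unfolding F_def by auto
    then have "CS n N" using flow_CS[OF assms] unfolding a_def by blast
    then show "immersible n N" using CS_imm[OF assms] by blast
  qed
  then show ?thesis using mf sum by simp
qed

end
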